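(* Let $\mathcal{M}=(\mathcal{S},\mathcal{A},\mathcal{P},r,\gamma)$ be a finite MDP with $|\mathcal{S}|=S$, $|\mathcal{A}|=A$, $\gamma\in[0,1)$. Let $\mathcal{F}=\mathbb{R}^{SA}$, let $\|\cdot\|$ be a strictly monotone norm on $\mathbb{R}^{SA}$ (i.e. $Q\geq Q'\geq0$ and $Q\ne Q'$ imply $\|Q\|>\|Q'\|$), let $\mu_0$ be a stationary policy and $f_0\in\mathbb{R}^{SA}$ with $T_{\mu_0}f_0\geq f_0$. Let $(f_k)$, $(\mu_k)$ be generated by Reliable Policy Iteration: for $k=0,1,2,\dots$, $$f_{k+1}\in\arg\max_{f\in\mathcal{F}}\ \|f-f_k\|\quad\text{subject to}\quad T_{\mu_k} f\geq f\geq f_k,$$ and $\mu_{k+1}$ is a deterministic policy greedy with respect to $f_{k+1}$. Then $f_{k+1}=Q_{\mu_k}$ for all $k\ge0$, $f_\infty:=\lim_{k\to\infty}f_k=Q_*$, and any deterministic policy $\mu_\infty$ greedy with respect to $f_\infty$ is optimal.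
   Context: Functions $\mathcal{S}\times\mathcal{A}\to\mathbb{R}$ are identified with vectors in $\mathbb{R}^{SA}$. A stationary policy is a map $\mu:\mathcal{S}\to\Delta(\mathcal{A})$; its Q-value function is $Q_\mu(s,a)=\mathbb{E}[\sum_{t\ge0}\gamma^t r(s_t,a_t)\mid s_0=s,a_0=a]$ with $s_{t+1}\sim\mathcal{P}(\cdot|s_t,a_t)$, $a_{t+1}\sim\mu(\cdot|s_{t+1})$. The Bellman operator is $T_\mu Q(s,a)=r(s,a)+\gamma\sum_{s',a'}\mathcal{P}(s'|s,a)\mu(a'|s')Q(s',a')$. $Q_*$ is the optimal Q-value function. A deterministic policy $\mu$ is greedy with respect to $f$ if $\mu(s)\in\arg\max_a f(s,a)$ for all $s$. Vector inequalities are coordinate-wise. *)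

theory Defs
  imports Complex_Main
begin

text \<open>Q-functions are functions 's \<times> 'a \<Rightarrow> real (= vectors in R^{SA}),
  ordered coordinate-wise (the library order on functions).\<close>

definition is_kernel :: "('s::finite \<Rightarrow> 'a::finite \<Rightarrow> 's \<Rightarrow> real) \<Rightarrow> bool" where
  "is_kernel P \<longleftrightarrow> (\<forall>s a s'. 0 \<le> P s a s') \<and> (\<forall>s a. (\<Sum>s'\<in>UNIV. P s a s') = 1)"

definition is_policy :: "('s::finite \<Rightarrow> 'a::finite \<Rightarrow> real) \<Rightarrow> bool" where
  "is_policy mu \<longleftrightarrow> (\<forall>s a. 0 \<le> mu s a) \<and> (\<forall>s. (\<Sum>a\<in>UNIV. mu s a) = 1)"

definition det_policy :: "('s \<Rightarrow> 'a) \<Rightarrow> ('s \<Rightarrow> 'a \<Rightarrow> real)" where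
  "det_policy d = (\<lambda>s a. if a = d s then 1 else 0)"

definition greedy :: "('s \<Rightarrow> 'a) \<Rightarrow> ('s \<times> 'a \<Rightarrow> real) \<Rightarrow> bool" where
  "greedy d f \<longleftrightarrow> (\<forall>s a. f (s, a) \<le> f (s, d s))"

definition bellman ::
  "('s::finite \<Rightarrow> 'a::finite \<Rightarrow> 's \<Rightarrow> real) \<Rightarrow> ('s \<Rightarrow> 'a \<Rightarrow> real) \<Rightarrow> real
    \<Rightarrow> ('s \<Rightarrow> 'a \<Rightarrow> real) \<Rightarrow> ('s \<times> 'a \<Rightarrow> real) \<Rightarrow> ('s \<times> 'a \<Rightarrow> real)" where
  "bellman P r gamma mu Q = (\<lambda>(s, a). r s a +
      gamma * (\<Sum>s'\<in>UNIV. \<Sum>a'\<in>UNIV. P s a s' * mu s' a' * Q (s', a')))"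

text \<open>n-step transition probabilities of the state-action chain
  (s_t,a_t) \<rightarrow> (s_{t+1},a_{t+1}) with s_{t+1} ~ P(.|s_t,a_t), a_{t+1} ~ mu(.|s_{t+1}).\<close>
fun nstep ::
  "('s::finite \<Rightarrow> 'a::finite \<Rightarrow> 's \<Rightarrow> real) \<Rightarrow> ('s \<Rightarrow> 'a \<Rightarrow> real) \<Rightarrow> nat
    \<Rightarrow> 's \<times> 'a \<Rightarrow> 's \<times> 'a \<Rightarrow> real" where
  "nstep P mu 0 x y = (if x = y then 1 else 0)"
| "nstep P mu (Suc n) (s, a) y =
     (\<Sum>s'\<in>UNIV. \<Sum>a'\<in>UNIV. P s a s' * mu s' a' * nstep P mu n (s', a') y)"

text \<open>Q-value function Q_mu(s,a) = E[ sum_t gamma^t r(s_t,a_t) | s_0=s, a_0=a ],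
  written via the n-step distributions of the chain.\<close>
definition Qpol ::
  "('s::finite \<Rightarrow> 'a::finite \<Rightarrow> 's \<Rightarrow> real) \<Rightarrow> ('s \<Rightarrow> 'a \<Rightarrow> real) \<Rightarrow> real
    \<Rightarrow> ('s \<Rightarrow> 'a \<Rightarrow> real) \<Rightarrow> ('s \<times> 'a \<Rightarrow> real)" where
  "Qpol P r gamma mu = (\<lambda>x. \<Sum>t. gamma ^ t * (\<Sum>y\<in>UNIV. nstep P mu t x y * r (fst y) (snd y)))"

definition Qstar ::
  "('s::finite \<Rightarrow> 'a::finite \<Rightarrow> 's \<Rightarrow> real) \<Rightarrow> ('s \<Rightarrow> 'a \<Rightarrow> real) \<Rightarrow> real
    \<Rightarrow> ('s \<times> 'a \<Rightarrow> real)" where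
  "Qstar P r gamma = (\<lambda>x. SUP mu\<in>{mu. is_policy mu}. Qpol P r gamma mu x)"

definition optimal_policy ::
  "('s::finite \<Rightarrow> 'a::finite \<Rightarrow> 's \<Rightarrow> real) \<Rightarrow> ('s \<Rightarrow> 'a \<Rightarrow> real) \<Rightarrow> real
    \<Rightarrow> ('s \<Rightarrow> 'a \<Rightarrow> real) \<Rightarrow> bool" where
  "optimal_policy P r gamma mu \<longleftrightarrow> Qpol P r gamma mu = Qstar P r gamma"

definition is_norm :: "(('s \<times> 'a \<Rightarrow> real) \<Rightarrow> real) \<Rightarrow> bool" where
  "is_norm N \<longleftrightarrow> (\<forall>x. 0 \<le> N x) \<and> (\<forall>x. N x = 0 \<longleftrightarrow> x = (\<lambda>_. 0))
     \<and> (\<forall>c x. N (\<lambda>i. c * x i) = \<bar>c\<bar> * N x)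
     \<and> (\<forall>x y. N (\<lambda>i. x i + y i) \<le> N x + N y)"

definition strictly_monotone_norm :: "(('s \<times> 'a \<Rightarrow> real) \<Rightarrow> real) \<Rightarrow> bool" where
  "strictly_monotone_norm N \<longleftrightarrow>
     (\<forall>Q Q'. Q' \<le> Q \<and> (\<lambda>_. 0) \<le> Q' \<and> Q \<noteq> Q' \<longrightarrow> N Q' < N Q)"

definition rpi_feasible ::
  "('s::finite \<Rightarrow> 'a::finite \<Rightarrow> 's \<Rightarrow> real) \<Rightarrow> ('s \<Rightarrow> 'a \<Rightarrow> real) \<Rightarrow> real
    \<Rightarrow> ('s \<Rightarrow> 'a \<Rightarrow> real) \<Rightarrow> ('s \<times> 'a \<Rightarrow> real) \<Rightarrow> ('s \<times> 'a \<Rightarrow> real) \<Rightarrow> bool" where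
  "rpi_feasible P r gamma mu fk g \<longleftrightarrow> g \<le> bellman P r gamma mu g \<and> fk \<le> g"

end

theory Submission
  imports Defs
begin

definition avg :: "('s::finite \<Rightarrow> 'a::finite \<Rightarrow> 's \<Rightarrow> real) \<Rightarrow> ('s \<Rightarrow> 'a \<Rightarrow> real) \<Rightarrow> ('s \<times> 'a \<Rightarrow> real) \<Rightarrow> 's \<Rightarrow> 'a \<Rightarrow> real" where
  "avg P mu h s a = (\<Sum>s'\<in>UNIV. \<Sum>a'\<in>UNIV. P s a s' * mu s' a' * h (s', a'))"

lemma bellman_avg: "bellman P r gamma mu Q (s, a) = r s a + gamma * avg P mu Q s a"
  by (simp add: bellman_def avg_def)

lemma weights_sum:
  assumes "is_kernel P" "is_policy mu"
  shows "(\<Sum>s'\<in>UNIV. \<Sum>a'\<in>UNIV. P s a s' * mu s' a') = 1"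
proof -
  have "(\<Sum>s'\<in>UNIV. \<Sum>a'\<in>UNIV. P s a s' * mu s' a') = (\<Sum>s'\<in>UNIV. P s a s' * (\<Sum>a'\<in>UNIV. mu s' a'))"
    by (simp add: sum_distrib_left)
  also have "\<dots> = 1" using assms by (simp add: is_kernel_def is_policy_def)
  finally show ?thesis .
qed

lemma weights_nonneg:
  assumes "is_kernel P" "is_policy mu"
  shows "0 \<le> P s a s' * mu s' a'"
  using assms by (simp add: is_kernel_def is_policy_def)

lemma avg_mono:
  assumes "is_kernel P" "is_policy mu" "\<And>y. h y \<le> h' y"
  shows "avg P mu h s a \<le> avg P mu h' s a"
  unfolding avg_def
  by (intro sum_mono mult_left_mono assms(3) weights_nonneg[OF assms(1,2)])

lemma avg_const_add:
  assumes "is_kernel P" "is_policy mu"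
  shows "avg P mu (\<lambda>y. h y + c) s a = avg P mu h s a + c"
proof -
  have "avg P mu (\<lambda>y. h y + c) s a = avg P mu h s a + c * (\<Sum>s'\<in>UNIV. \<Sum>a'\<in>UNIV. P s a s' * mu s' a')"
    unfolding avg_def by (simp add: algebra_simps sum.distrib sum_distrib_left)
  then show ?thesis using weights_sum[OF assms] by simp
qed

lemma avg_const_le:
  assumes "is_kernel P" "is_policy mu" "\<And>y. h y \<le> c"
  shows "avg P mu h s a \<le> c"
proof -
  have "avg P mu h s a \<le> avg P mu (\<lambda>y. 0 + c) s a"
    using avg_mono[OF assms(1,2)] assms(3) by simp
  also have "\<dots> = avg P mu (\<lambda>y. 0) s a + c" by (rule avg_const_add[OF assms(1,2)])
  finally show ?thesis by (simp add: avg_def)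
qed

lemma avg_diff:
  "avg P mu (\<lambda>y. h y - h' y) s a = avg P mu h s a - avg P mu h' s a"
  unfolding avg_def by (simp add: algebra_simps sum_subtractf)

lemma det_policy_is_policy: "is_policy (det_policy (d :: 's::finite \<Rightarrow> 'a::finite))"
  by (simp add: is_policy_def det_policy_def)

lemma avg_greedy:
  assumes "is_kernel P" "is_policy mu" "greedy d h"
  shows "avg P mu h s a \<le> avg P (det_policy d) h s a"
proof -
  have inner: "(\<Sum>a'\<in>UNIV. mu s' a' * h (s', a')) \<le> h (s', d s')" for s'
  proof -
    have "(\<Sum>a'\<in>UNIV. mu s' a' * h (s', a')) \<le> (\<Sum>a'\<in>UNIV. mu s' a' * h (s', d s'))"
      using assms(2,3) by (intro sum_mono mult_left_mono) (auto simp: is_policy_def greedy_def)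
    also have "\<dots> = h (s', d s')" using assms(2) by (simp add: is_policy_def flip: sum_distrib_right)
    finally show ?thesis .
  qed
  have "avg P mu h s a = (\<Sum>s'\<in>UNIV. P s a s' * (\<Sum>a'\<in>UNIV. mu s' a' * h (s', a')))"
    unfolding avg_def by (simp add: sum_distrib_left mult.assoc)
  also have "\<dots> \<le> (\<Sum>s'\<in>UNIV. P s a s' * h (s', d s'))"
    using assms(1) inner by (intro sum_mono mult_left_mono) (auto simp: is_kernel_def)
  also have "\<dots> = avg P (det_policy d) h s a"
  proof -
    have "(\<Sum>a'\<in>UNIV. P s a s' * det_policy d s' a' * h (s', a')) = P s a s' * h (s', d s')" for s'
    proof -
      have "(\<Sum>a'\<in>UNIV. P s a s' * det_policy d s' a' * h (s', a')) = (\<Sum>a'\<in>UNIV. if d s' = a' then P s a s' * h (s', a') else 0)"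
        by (rule sum.cong) (auto simp: det_policy_def)
      then show ?thesis by simp
    qed
    then show ?thesis unfolding avg_def by simp
  qed
  finally show ?thesis .
qed

lemma nstep_nonneg:
  assumes "is_kernel P" "is_policy mu"
  shows "0 \<le> nstep P mu n x y"
proof (induction n arbitrary: x)
  case 0 then show ?case by simp
next
  case (Suc n)
  obtain s a where x: "x = (s, a)" by fastforce
  show ?case unfolding x using Suc weights_nonneg[OF assms]
    by (auto intro!: sum_nonneg)
qed

lemma nstep_sum:
  assumes "is_kernel P" "is_policy mu"
  shows "(\<Sum>y\<in>UNIV. nstep P mu n x y) = 1"
proof (induction n arbitrary: x)
  case 0 then show ?case by simp
next
  case (Suc n)
  obtain s a where x: "x = (s, a)" by fastforce
  have "(\<Sum>y\<in>UNIV. nstep P mu (Suc n) x y)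
      = (\<Sum>s'\<in>UNIV. \<Sum>a'\<in>UNIV. P s a s' * mu s' a' * (\<Sum>y\<in>UNIV. nstep P mu n (s', a') y))"
    unfolding x
  proof -
    have "(\<Sum>y\<in>UNIV. nstep P mu (Suc n) (s, a) y) = (\<Sum>y\<in>UNIV. \<Sum>s'\<in>UNIV. \<Sum>a'\<in>UNIV. P s a s' * mu s' a' * nstep P mu n (s', a') y)"
      by simp
    also have "\<dots> = (\<Sum>s'\<in>UNIV. \<Sum>y\<in>UNIV. \<Sum>a'\<in>UNIV. P s a s' * mu s' a' * nstep P mu n (s', a') y)"
      by (rule sum.swap)
    also have "\<dots> = (\<Sum>s'\<in>UNIV. \<Sum>a'\<in>UNIV. \<Sum>y\<in>UNIV. P s a s' * mu s' a' * nstep P mu n (s', a') y)"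
      by (rule sum.cong[OF refl], rule sum.swap)
    also have "\<dots> = (\<Sum>s'\<in>UNIV. \<Sum>a'\<in>UNIV. P s a s' * mu s' a' * (\<Sum>y\<in>UNIV. nstep P mu n (s', a') y))"
      by (simp add: sum_distrib_left)
    finally show "(\<Sum>y\<in>UNIV. nstep P mu (Suc n) (s, a) y) = (\<Sum>s'\<in>UNIV. \<Sum>a'\<in>UNIV. P s a s' * mu s' a' * (\<Sum>y\<in>UNIV. nstep P mu n (s', a') y))" .
  qed
  also have "\<dots> = 1" using Suc weights_sum[OF assms] by simp
  finally show ?case .
qed

lemma nstep_le1:
  assumes "is_kernel P" "is_policy mu"
  shows "nstep P mu n x y \<le> 1"
proof -
  have "nstep P mu n x y \<le> (\<Sum>y\<in>UNIV. nstep P mu n x y)"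
    by (rule member_le_sum) (auto intro: nstep_nonneg[OF assms])
  then show ?thesis using nstep_sum[OF assms] by simp
qed


definition Rb :: "('s::finite \<Rightarrow> 'a::finite \<Rightarrow> real) \<Rightarrow> real" where
  "Rb r = (\<Sum>y\<in>UNIV. \<bar>r (fst y) (snd y)\<bar>)"

lemma term_bound:
  assumes "is_kernel P" "is_policy mu"
  shows "\<bar>\<Sum>y\<in>UNIV. nstep P mu t x y * r (fst y) (snd y)\<bar> \<le> Rb r"
proof -
  have "\<bar>\<Sum>y\<in>UNIV. nstep P mu t x y * r (fst y) (snd y)\<bar> \<le> (\<Sum>y\<in>UNIV. \<bar>nstep P mu t x y * r (fst y) (snd y)\<bar>)"
    by (rule sum_abs)
  also have "\<dots> \<le> Rb r" unfolding Rb_def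
  proof (rule sum_mono)
    fix y
    have "\<bar>nstep P mu t x y * r (fst y) (snd y)\<bar> = nstep P mu t x y * \<bar>r (fst y) (snd y)\<bar>"
      using nstep_nonneg[OF assms] by (simp add: abs_mult)
    also have "\<dots> \<le> 1 * \<bar>r (fst y) (snd y)\<bar>"
      by (rule mult_right_mono) (use nstep_le1[OF assms] in auto)
    finally show "\<bar>nstep P mu t x y * r (fst y) (snd y)\<bar> \<le> \<bar>r (fst y) (snd y)\<bar>" by simp
  qed
  finally show ?thesis .
qed

lemma Qpol_summable:
  assumes "is_kernel P" "is_policy mu" "0 \<le> gamma" "gamma < 1"
  shows "summable (\<lambda>t. gamma ^ t * (\<Sum>y\<in>UNIV. nstep P mu t x y * r (fst y) (snd y)))"
proof (rule summable_comparison_test)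
  show "\<exists>N. \<forall>n\<ge>N. norm (gamma ^ n * (\<Sum>y\<in>UNIV. nstep P mu n x y * r (fst y) (snd y))) \<le> gamma ^ n * Rb r"
  proof (intro exI[of _ 0] allI impI)
    fix n :: nat
    show "norm (gamma ^ n * (\<Sum>y\<in>UNIV. nstep P mu n x y * r (fst y) (snd y))) \<le> gamma ^ n * Rb r"
      using term_bound[OF assms(1,2), of n x r] assms(3) by (simp add: abs_mult mult_left_mono)
  qed
  show "summable (\<lambda>n. gamma ^ n * Rb r)"
    using assms(3,4) by (intro summable_mult2 summable_geometric) simp
qed

lemma Qpol_bound:
  assumes "is_kernel P" "is_policy mu" "0 \<le> gamma" "gamma < 1"
  shows "\<bar>Qpol P r gamma mu x\<bar> \<le> Rb r / (1 - gamma)"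
proof -
  have g: "(\<lambda>n. gamma ^ n * Rb r) sums (Rb r / (1 - gamma))"
    using sums_mult2[OF geometric_sums[of gamma], of "Rb r"] assms(3,4) by (simp add: field_simps)
  have s: "summable (\<lambda>t. gamma ^ t * (\<Sum>y\<in>UNIV. nstep P mu t x y * r (fst y) (snd y)))"
    by (rule Qpol_summable[OF assms])
  have b: "\<bar>gamma ^ t * (\<Sum>y\<in>UNIV. nstep P mu t x y * r (fst y) (snd y))\<bar> \<le> gamma ^ t * Rb r" for t
    using term_bound[OF assms(1,2), of t x r] assms(3) by (simp add: abs_mult mult_left_mono)
  have "Qpol P r gamma mu x \<le> Rb r / (1 - gamma)"
    unfolding Qpol_def using b by (intro sums_le[OF _ summable_sums[OF s] g]) (auto simp: abs_le_iff)
  moreover have "- (Rb r / (1 - gamma)) \<le> Qpol P r gamma mu x"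
    unfolding Qpol_def using b sums_minus[OF g]
    by (intro sums_le[OF _ _ summable_sums[OF s]]) (auto simp: abs_le_iff minus_le_iff)
  ultimately show ?thesis by auto
qed

lemma Qpol_fix:
  assumes "is_kernel P" "is_policy mu" "0 \<le> gamma" "gamma < 1"
  shows "Qpol P r gamma mu (s, a) = r s a + gamma * avg P mu (Qpol P r gamma mu) s a"
proof -
  define b where "b x t = gamma ^ t * (\<Sum>y\<in>UNIV. nstep P mu t x y * r (fst y) (snd y))" for x t
  have bs: "b x sums Qpol P r gamma mu x" for x
    unfolding b_def Qpol_def by (rule summable_sums[OF Qpol_summable[OF assms]])
  have suc: "b (s, a) (Suc t) = gamma * (\<Sum>s'\<in>UNIV. \<Sum>a'\<in>UNIV. P s a s' * mu s' a' * b (s', a') t)" for t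
  proof -
    have "(\<Sum>y\<in>UNIV. nstep P mu (Suc t) (s, a) y * r (fst y) (snd y))
        = (\<Sum>y\<in>UNIV. \<Sum>s'\<in>UNIV. \<Sum>a'\<in>UNIV. P s a s' * mu s' a' * (nstep P mu t (s', a') y * r (fst y) (snd y)))"
      by (simp add: sum_distrib_right mult.assoc)
    also have "\<dots> = (\<Sum>s'\<in>UNIV. \<Sum>y\<in>UNIV. \<Sum>a'\<in>UNIV. P s a s' * mu s' a' * (nstep P mu t (s', a') y * r (fst y) (snd y)))"
      by (rule sum.swap)
    also have "\<dots> = (\<Sum>s'\<in>UNIV. \<Sum>a'\<in>UNIV. \<Sum>y\<in>UNIV. P s a s' * mu s' a' * (nstep P mu t (s', a') y * r (fst y) (snd y)))"
      by (rule sum.cong[OF refl], rule sum.swap)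
    also have "\<dots> = (\<Sum>s'\<in>UNIV. \<Sum>a'\<in>UNIV. P s a s' * mu s' a' * (\<Sum>y\<in>UNIV. nstep P mu t (s', a') y * r (fst y) (snd y)))"
      by (simp add: sum_distrib_left)
    finally have e: "(\<Sum>y\<in>UNIV. nstep P mu (Suc t) (s, a) y * r (fst y) (snd y)) = \<dots>" .
    show ?thesis unfolding b_def e
      by (simp add: sum_distrib_left algebra_simps)
  qed
  have "(\<lambda>t. gamma * (\<Sum>s'\<in>UNIV. \<Sum>a'\<in>UNIV. P s a s' * mu s' a' * b (s', a') t))
        sums (gamma * (\<Sum>s'\<in>UNIV. \<Sum>a'\<in>UNIV. P s a s' * mu s' a' * Qpol P r gamma mu (s', a')))"
    by (intro sums_mult sums_sum sums_mult bs)
  then have "(\<lambda>t. b (s, a) (Suc t)) sums (gamma * avg P mu (Qpol P r gamma mu) s a)"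
    unfolding suc avg_def .
  then have "b (s, a) sums (gamma * avg P mu (Qpol P r gamma mu) s a + b (s, a) 0)"
    by (simp add: sums_Suc_iff)
  moreover have "b (s, a) 0 = r s a"
  proof -
    have "(\<Sum>y\<in>UNIV. nstep P mu 0 (s,a) y * r (fst y) (snd y)) = (\<Sum>y\<in>UNIV. if (s,a) = y then r (fst y) (snd y) else 0)"
      by (rule sum.cong) auto
    then show ?thesis unfolding b_def by simp
  qed
  ultimately show ?thesis using sums_unique2[OF bs] by simp
qed

lemma Qpol_fix_bellman:
  assumes "is_kernel P" "is_policy mu" "0 \<le> gamma" "gamma < 1"
  shows "bellman P r gamma mu (Qpol P r gamma mu) = Qpol P r gamma mu"
  by (rule ext) (auto simp: bellman_avg Qpol_fix[OF assms])

lemma sub_fix_le: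
  assumes "is_kernel P" "is_policy mu" "0 \<le> gamma" "gamma < 1"
    and "g \<le> bellman P r gamma mu g"
  shows "g \<le> Qpol P r gamma mu"
proof -
  define D where "D x = g x - Qpol P r gamma mu x" for x
  define m where "m = Max (range D)"
  have Dm: "D x \<le> m" for x unfolding m_def by simp
  have "m \<in> range D" unfolding m_def by (rule Max_in) auto
  then obtain x0 where x0: "D x0 = m" by blast
  obtain s a where x0s: "x0 = (s, a)" by fastforce
  have "m \<le> 0"
  proof (rule ccontr)
    assume "\<not> m \<le> 0"
    have "g (s, a) \<le> r s a + gamma * avg P mu g s a"
      using assms(5) by (auto simp: le_fun_def bellman_avg)
    then have "D (s, a) \<le> gamma * (avg P mu g s a - avg P mu (Qpol P r gamma mu) s a)"
      unfolding D_def Qpol_fix[OF assms(1-4)] by (simp add: algebra_simps)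
    also have "\<dots> = gamma * avg P mu D s a" unfolding D_def avg_diff ..
    also have "\<dots> \<le> gamma * m"
      using avg_const_le[OF assms(1,2) Dm] assms(3) by (intro mult_left_mono)
    finally have "m \<le> gamma * m" using x0 x0s by simp
    with \<open>\<not> m \<le> 0\<close> assms(4) show False
      by (smt (verit) mult_less_cancel_right2)
  qed
  then show ?thesis using Dm unfolding D_def le_fun_def by (smt (verit))
qed

lemma Qpol_le_Qstar:
  assumes "is_kernel P" "is_policy mu" "0 \<le> gamma" "gamma < 1"
  shows "Qpol P r gamma mu x \<le> Qstar P r gamma x"
  unfolding Qstar_def
proof (rule cSUP_upper)
  show "mu \<in> {mu. is_policy mu}" using assms(2) by simp
  show "bdd_above ((\<lambda>mu. Qpol P r gamma mu x) ` {mu. is_policy mu})"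
    using Qpol_bound[OF assms(1) _ assms(3,4), where r=r and x=x]
    by (intro bdd_aboveI[of _ "Rb r / (1 - gamma)"]) (blast dest: abs_le_D1)
qed

lemma Qstar_le:
  assumes "\<And>mu. is_policy mu \<Longrightarrow> Qpol P r gamma mu x \<le> c"
  shows "Qstar P r gamma x \<le> c"
  unfolding Qstar_def
  by (rule cSUP_least) (auto intro: assms det_policy_is_policy)


theorem theorem2:
  fixes P :: "'s::finite \<Rightarrow> 'a::finite \<Rightarrow> 's \<Rightarrow> real"
    and r :: "'s \<Rightarrow> 'a \<Rightarrow> real"
    and gamma :: real
    and N :: "('s \<times> 'a \<Rightarrow> real) \<Rightarrow> real"
    and f :: "nat \<Rightarrow> ('s \<times> 'a \<Rightarrow> real)"
    and mu :: "nat \<Rightarrow> ('s \<Rightarrow> 'a \<Rightarrow> real)"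
  assumes kernel: "is_kernel P"
    and gamma: "0 \<le> gamma" "gamma < 1"
    and norm: "is_norm N" "strictly_monotone_norm N"
    and init_pol: "is_policy (mu 0)"
    and init: "f 0 \<le> bellman P r gamma (mu 0) (f 0)"
    and step_f: "\<forall>k. rpi_feasible P r gamma (mu k) (f k) (f (Suc k)) \<and>
                    (\<forall>g. rpi_feasible P r gamma (mu k) (f k) g \<longrightarrow>
                         N (\<lambda>x. g x - f k x) \<le> N (\<lambda>x. f (Suc k) x - f k x))"
    and step_mu: "\<forall>k. \<exists>d. mu (Suc k) = det_policy d \<and> greedy d (f (Suc k))"
  shows "(\<forall>k. f (Suc k) = Qpol P r gamma (mu k))
       \<and> (\<forall>x. (\<lambda>k. f k x) \<longlonglongrightarrow> Qstar P r gamma x)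
       \<and> (\<forall>d. greedy d (Qstar P r gamma) \<longrightarrow> optimal_policy P r gamma (det_policy d))"
proof -
  have pol: "is_policy (mu k)" for k
  proof (cases k)
    case 0 then show ?thesis using init_pol by simp
  next
    case (Suc j) then show ?thesis using step_mu det_policy_is_policy by metis
  qed
  define Q where "Q k = Qpol P r gamma (mu k)" for k
  have Qfix: "Q k (s, a) = r s a + gamma * avg P (mu k) (Q k) s a" for k s a
    unfolding Q_def by (rule Qpol_fix[OF kernel pol gamma])
  have Qbell: "bellman P r gamma (mu k) (Q k) = Q k" for k
    unfolding Q_def by (rule Qpol_fix_bellman[OF kernel pol gamma])
  have step: "f (Suc k) = Q k" if sub: "f k \<le> bellman P r gamma (mu k) (f k)" for k
  proof -
    have fkQ: "f k \<le> Q k" unfolding Q_def by (rule sub_fix_le[OF kernel pol gamma sub])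
    have feasQ: "rpi_feasible P r gamma (mu k) (f k) (Q k)"
      unfolding rpi_feasible_def Qbell using fkQ by simp
    have feasf: "rpi_feasible P r gamma (mu k) (f k) (f (Suc k))" using step_f by blast
    have Nle: "N (\<lambda>x. Q k x - f k x) \<le> N (\<lambda>x. f (Suc k) x - f k x)"
      using step_f feasQ by blast
    have fQ: "f (Suc k) \<le> Q k" unfolding Q_def
      by (rule sub_fix_le[OF kernel pol gamma]) (use feasf in \<open>simp add: rpi_feasible_def\<close>)
    have fkf: "f k \<le> f (Suc k)" using feasf by (simp add: rpi_feasible_def)
    have sm: "\<And>Q Q'. Q' \<noteq> Q \<Longrightarrow> Q' \<le> Q \<Longrightarrow> (\<lambda>_. 0) \<le> Q' \<Longrightarrow> N Q' < N Q"
      using norm(2) unfolding strictly_monotone_norm_def by blast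
    show ?thesis
    proof (rule ccontr)
      assume ne: "f (Suc k) \<noteq> Q k"
      have "(\<lambda>x. f (Suc k) x - f k x) \<noteq> (\<lambda>x. Q k x - f k x)"
      proof
        assume "(\<lambda>x. f (Suc k) x - f k x) = (\<lambda>x. Q k x - f k x)"
        then have "f (Suc k) x = Q k x" for x by (metis add_diff_cancel_right' diff_add_cancel)
        with ne show False by blast
      qed
      moreover have "(\<lambda>x. f (Suc k) x - f k x) \<le> (\<lambda>x. Q k x - f k x)"
        using fQ by (simp add: le_fun_def)
      moreover have "(\<lambda>_. 0) \<le> (\<lambda>x. f (Suc k) x - f k x)"
        using fkf by (simp add: le_fun_def)
      ultimately have "N (\<lambda>x. f (Suc k) x - f k x) < N (\<lambda>x. Q k x - f k x)"
        by (rule sm)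
      with Nle show False by simp
    qed
  qed
  have improve: "f (Suc k) \<le> bellman P r gamma (mu (Suc k)) (f (Suc k))"
    if eq: "f (Suc k) = Q k" for k
  proof -
    obtain d where d: "mu (Suc k) = det_policy d" "greedy d (f (Suc k))" using step_mu by blast
    show ?thesis unfolding le_fun_def
    proof
      fix x :: "'s \<times> 'a"
      obtain s a where x: "x = (s, a)" by fastforce
      have "avg P (mu k) (Q k) s a \<le> avg P (det_policy d) (Q k) s a"
        using avg_greedy[OF kernel pol] d(2) eq by simp
      then have "Q k (s, a) \<le> r s a + gamma * avg P (mu (Suc k)) (Q k) s a"
        unfolding Qfix d(1) using gamma(1) by (simp add: mult_left_mono)
      then show "f (Suc k) x \<le> bellman P r gamma (mu (Suc k)) (f (Suc k)) x"
        unfolding x bellman_avg eq .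
    qed
  qed
  have sub_all: "f k \<le> bellman P r gamma (mu k) (f k)" for k
  proof (induction k)
    case 0 then show ?case by (rule init)
  next
    case (Suc k) then show ?case using step improve by blast
  qed
  have fQ: "f (Suc k) = Q k" for k using step sub_all by blast
  have Qmono: "Q k \<le> Q (Suc k)" for k
    using sub_fix_le[OF kernel pol gamma improve[OF fQ]] fQ unfolding Q_def by simp
  define B where "B = 2 * (Rb r / (1 - gamma))"
  have Qbound: "Qpol P r gamma nu x \<le> Q k x + gamma ^ k * B" if "is_policy nu" for nu k x
    using that
  proof (induction k arbitrary: nu x)
    case 0
    show ?case using Qpol_bound[OF kernel 0 gamma, where r=r and x=x] Qpol_bound[OF kernel pol[of 0] gamma, where r=r and x=x]
      unfolding Q_def B_def by (simp add: abs_le_iff)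
  next
    case (Suc k)
    obtain s a where x: "x = (s, a)" by fastforce
    obtain d where d: "mu (Suc k) = det_policy d" "greedy d (Q k)" using step_mu fQ by metis
    have "avg P nu (Qpol P r gamma nu) s a \<le> avg P nu (\<lambda>y. Q k y + gamma ^ k * B) s a"
      by (rule avg_mono[OF kernel Suc.prems]) (rule Suc.IH[OF Suc.prems])
    also have "\<dots> = avg P nu (Q k) s a + gamma ^ k * B" by (rule avg_const_add[OF kernel Suc.prems])
    also have "avg P nu (Q k) s a \<le> avg P (det_policy d) (Q k) s a"
      by (rule avg_greedy[OF kernel Suc.prems d(2)])
    also have "avg P (det_policy d) (Q k) s a \<le> avg P (mu (Suc k)) (Q (Suc k)) s a"
      unfolding d(1)[symmetric] using Qmono by (intro avg_mono[OF kernel pol]) (rule le_funD)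
    finally have av: "avg P nu (Qpol P r gamma nu) s a \<le> avg P (mu (Suc k)) (Q (Suc k)) s a + gamma ^ k * B"
      by simp
    have "gamma * avg P nu (Qpol P r gamma nu) s a \<le> gamma * avg P (mu (Suc k)) (Q (Suc k)) s a + gamma ^ Suc k * B"
      using mult_left_mono[OF av gamma(1)] by (simp add: distrib_left mult.assoc)
    then show ?case unfolding x Qpol_fix[OF kernel Suc.prems gamma] Qfix by simp
  qed
  have Qle: "Q k x \<le> Qstar P r gamma x" for k x
    unfolding Q_def by (rule Qpol_le_Qstar[OF kernel pol gamma])
  have Qge: "Qstar P r gamma x \<le> Q k x + gamma ^ k * B" for k x
    by (rule Qstar_le) (rule Qbound)
  have conv: "(\<lambda>k. Q k x) \<longlonglongrightarrow> Qstar P r gamma x" for x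
  proof (rule tendsto_sandwich[of "\<lambda>k. Qstar P r gamma x - gamma ^ k * B" _ _ "\<lambda>k. Qstar P r gamma x"])
    show "\<forall>\<^sub>F n in sequentially. Qstar P r gamma x - gamma ^ n * B \<le> Q n x"
      using Qge by (auto simp: algebra_simps)
    show "\<forall>\<^sub>F n in sequentially. Q n x \<le> Qstar P r gamma x" using Qle by auto
    have "(\<lambda>k. gamma ^ k) \<longlonglongrightarrow> 0" using gamma by (intro LIMSEQ_power_zero) auto
    then have "(\<lambda>k. Qstar P r gamma x - gamma ^ k * B) \<longlonglongrightarrow> Qstar P r gamma x - 0 * B"
      by (intro tendsto_diff[OF tendsto_const] tendsto_mult[OF _ tendsto_const])
    then show "(\<lambda>k. Qstar P r gamma x - gamma ^ k * B) \<longlonglongrightarrow> Qstar P r gamma x" by simp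
  qed simp
  have part2: "(\<lambda>k. f k x) \<longlonglongrightarrow> Qstar P r gamma x" for x
  proof (rule LIMSEQ_imp_Suc)
    have "(\<lambda>k. f (Suc k) x) = (\<lambda>k. Q k x)" using fQ by presburger
    then show "(\<lambda>k. f (Suc k) x) \<longlonglongrightarrow> Qstar P r gamma x" using conv[of x] by (simp only:)
  qed
  have part3: "optimal_policy P r gamma (det_policy d)" if g: "greedy d (Qstar P r gamma)" for d
  proof -
    have sub: "Qstar P r gamma \<le> bellman P r gamma (det_policy d) (Qstar P r gamma)"
      unfolding le_fun_def
    proof
      fix x :: "'s \<times> 'a"
      obtain s a where x: "x = (s, a)" by fastforce
      have "Q k (s, a) \<le> r s a + gamma * avg P (det_policy d) (Qstar P r gamma) s a" for k
      proof -
        have "avg P (mu k) (Q k) s a \<le> avg P (mu k) (Qstar P r gamma) s a"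
          using Qle by (intro avg_mono[OF kernel pol])
        also have "\<dots> \<le> avg P (det_policy d) (Qstar P r gamma) s a"
          by (rule avg_greedy[OF kernel pol g])
        finally show ?thesis unfolding Qfix using gamma(1) by (simp add: mult_left_mono)
      qed
      then have "Qstar P r gamma (s, a) \<le> r s a + gamma * avg P (det_policy d) (Qstar P r gamma) s a"
        by (intro LIMSEQ_le_const2[OF conv]) auto
      then show "Qstar P r gamma x \<le> bellman P r gamma (det_policy d) (Qstar P r gamma) x"
        unfolding x bellman_avg .
    qed
    have "Qstar P r gamma \<le> Qpol P r gamma (det_policy d)"
      by (rule sub_fix_le[OF kernel det_policy_is_policy gamma sub])
    moreover have "Qpol P r gamma (det_policy d) \<le> Qstar P r gamma"
      unfolding le_fun_def using Qpol_le_Qstar[OF kernel det_policy_is_policy gamma] by blast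
    ultimately show ?thesis unfolding optimal_policy_def by (rule antisym[rotated])
  qed
  show ?thesis using fQ part2 part3 unfolding Q_def by blast
qed

end
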